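(* Let $q>r\geq 1$ and $N\geq 1$ be integers. Then: (1) $f_{q,r}(N)\geq f_{q-t,r-t}(N)$ and $g_{q,r}(N)\geq g_{q-t,r-t}(N)$ for all integers $0\leq t<r$; (2) $f_{q,r}(N)\geq f_{q/d,r/d}(N)$ and $g_{q,r}(N)\geq g_{q/d,r/d}(N)$ for every positive integer $d$ dividing $\gcd(q,r)$; (3) if $p=\lfloor \frac{q}{q-r}\rfloor\geq 2$, then $f_{q,r}(N)\geq f_{p,p-1}(N)$ and $g_{q,r}(N)\geq g_{p,p-1}(N)$.
   Context: Colors are from $[q]$; path length means number of vertices. For a $q$-edge-colored complete graph $K$ on $[N]$ with its natural order, $f_{q,r}(K)$ is the maximum length of a monotone path (vertices strictly increasing) in $K$ using at most $r$ colors, and $f_{q,r}(N)$ is the minimum of $f_{q,r}(K)$ over all such $K$ on $N$ vertices. For a $q$-edge-colored tournament $T$ (orientation of a complete graph), $g_{q,r}(T)$ is the maximum length of a directed path in $T$ whose edges receive at most $r$ colors, and $g_{q,r}(N)$ is the minimum of $g_{q,r}(T)$ over all $q$-edge-colored $N$-vertex tournaments $T$. *)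

theory Defs
  imports Main
begin

(* Vertex set [N] = {1..N}. An edge {i,j} with i<j of the complete graph gets colour c i j. *)
definition edge_coloring :: "nat \<Rightarrow> nat \<Rightarrow> (nat \<Rightarrow> nat \<Rightarrow> nat) \<Rightarrow> bool" where
  "edge_coloring q N c \<longleftrightarrow> (\<forall>i j. 1 \<le> i \<and> i < j \<and> j \<le> N \<longrightarrow> c i j \<in> {1..q})"

definition path_colors :: "(nat \<Rightarrow> nat \<Rightarrow> nat) \<Rightarrow> nat list \<Rightarrow> nat set" where
  "path_colors c vs = {c (vs ! i) (vs ! Suc i) | i. Suc i < length vs}"

definition monotone_path :: "nat \<Rightarrow> nat list \<Rightarrow> bool" where
  "monotone_path N vs \<longleftrightarrow> vs \<noteq> [] \<and> sorted_wrt (<) vs \<and> set vs \<subseteq> {1..N}"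

(* f_{q,r}(K): longest monotone path (number of vertices) using at most r colours *)
definition fK :: "nat \<Rightarrow> nat \<Rightarrow> (nat \<Rightarrow> nat \<Rightarrow> nat) \<Rightarrow> nat" where
  "fK r N c = Max {length vs | vs. monotone_path N vs \<and> card (path_colors c vs) \<le> r}"

definition f :: "nat \<Rightarrow> nat \<Rightarrow> nat \<Rightarrow> nat" where
  "f q r N = Min {fK r N c | c. edge_coloring q N c}"

(* tournament on {1..N}: T i j means the arc i -> j *)
definition tournament :: "nat \<Rightarrow> (nat \<Rightarrow> nat \<Rightarrow> bool) \<Rightarrow> bool" where
  "tournament N T \<longleftrightarrow> (\<forall>i j. T i j \<longrightarrow> i \<in> {1..N} \<and> j \<in> {1..N}) \<and>
     (\<forall>i\<in>{1..N}. \<not> T i i) \<and>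
     (\<forall>i\<in>{1..N}. \<forall>j\<in>{1..N}. i \<noteq> j \<longrightarrow> (T i j \<longleftrightarrow> \<not> T j i))"

definition arc_coloring :: "nat \<Rightarrow> (nat \<Rightarrow> nat \<Rightarrow> bool) \<Rightarrow> (nat \<Rightarrow> nat \<Rightarrow> nat) \<Rightarrow> bool" where
  "arc_coloring q T c \<longleftrightarrow> (\<forall>i j. T i j \<longrightarrow> c i j \<in> {1..q})"

definition directed_path :: "nat \<Rightarrow> (nat \<Rightarrow> nat \<Rightarrow> bool) \<Rightarrow> nat list \<Rightarrow> bool" where
  "directed_path N T vs \<longleftrightarrow> vs \<noteq> [] \<and> distinct vs \<and> set vs \<subseteq> {1..N} \<and>
     (\<forall>i. Suc i < length vs \<longrightarrow> T (vs ! i) (vs ! Suc i))"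

definition gT :: "nat \<Rightarrow> nat \<Rightarrow> (nat \<Rightarrow> nat \<Rightarrow> bool) \<Rightarrow> (nat \<Rightarrow> nat \<Rightarrow> nat) \<Rightarrow> nat" where
  "gT r N T c = Max {length vs | vs. directed_path N T vs \<and> card (path_colors c vs) \<le> r}"

definition g :: "nat \<Rightarrow> nat \<Rightarrow> nat \<Rightarrow> nat" where
  "g q r N = Min {gT r N T c | T c. tournament N T \<and> arc_coloring q T c}"

end

theory Submission
  imports Defs
begin

lemma pc_map: "path_colors (\<lambda>i j. \<phi> (c i j)) vs = \<phi> ` path_colors c vs"
  unfolding path_colors_def by auto

lemma card_pre:
  fixes \<phi> :: "nat \<Rightarrow> nat" and q q' r' :: nat
  assumes rng: "\<forall>x\<in>{1..q}. \<phi> x \<in> {1..q'}"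
    and pre: "\<forall>S. S \<subseteq> {1..q'} \<and> card S \<le> r' \<longrightarrow> card {x\<in>{1..q}. \<phi> x \<in> S} \<le> r"
    and A: "A \<subseteq> {1..q}" and c: "card (\<phi> ` A) \<le> r'"
  shows "card A \<le> (r::nat)"
proof -
  have "\<phi> ` A \<subseteq> {1..q'}" using A rng by auto
  then have "card {x\<in>{1..q}. \<phi> x \<in> \<phi> ` A} \<le> r" using pre c by blast
  moreover have "card A \<le> card {x\<in>{1..q}. \<phi> x \<in> \<phi> ` A}"
    by (rule card_mono[OF finite_subset[of _ "{1..q}"]]) (use A in auto)
  ultimately show ?thesis by linarith
qed

lemma mono_len: assumes "monotone_path N vs" shows "length vs \<le> N"
proof -
  have "distinct vs" using assms unfolding monotone_path_def
    using strict_sorted_iff by blast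
  then have "length vs = card (set vs)" by (simp add: distinct_card)
  also have "\<dots> \<le> card {1..N}" using assms unfolding monotone_path_def
    by (intro card_mono) auto
  finally show ?thesis by simp
qed

lemma dir_len: assumes "directed_path N T vs" shows "length vs \<le> N"
proof -
  have "distinct vs" using assms unfolding directed_path_def by blast
  then have "length vs = card (set vs)" by (simp add: distinct_card)
  also have "\<dots> \<le> card {1..N}" using assms unfolding directed_path_def
    by (intro card_mono) auto
  finally show ?thesis by simp
qed

lemma fin_f: "finite {length vs | vs. monotone_path N vs \<and> P vs}"
  by (rule finite_subset[of _ "{0..N}"]) (auto dest: mono_len)

lemma fin_g: "finite {length vs | vs. directed_path N T vs \<and> P vs}"
  by (rule finite_subset[of _ "{0..N}"]) (auto dest: dir_len)

lemma ne_f: assumes "1 \<le> N" shows "{length vs | vs. monotone_path N vs \<and> card (path_colors c vs) \<le> r} \<noteq> {}"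
proof -
  have "monotone_path N [1]" using assms unfolding monotone_path_def by auto
  moreover have "path_colors c [1] = {}" unfolding path_colors_def by auto
  ultimately have "\<exists>vs. monotone_path N vs \<and> card (path_colors c vs) \<le> r"
    by (intro exI[of _ "[1]"]) simp
  then show ?thesis by auto
qed

lemma ne_g: assumes "1 \<le> N" shows "{length vs | vs. directed_path N T vs \<and> card (path_colors c vs) \<le> r} \<noteq> {}"
proof -
  have "directed_path N T [1]" using assms unfolding directed_path_def by auto
  moreover have "path_colors c [1] = {}" unfolding path_colors_def by auto
  ultimately have "\<exists>vs. directed_path N T vs \<and> card (path_colors c vs) \<le> r"
    by (intro exI[of _ "[1]"]) simp
  then show ?thesis by auto
qed

lemma fK_le: assumes "1 \<le> N" shows "fK r N c \<le> N"
  unfolding fK_def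
  by (rule Max.boundedI[OF fin_f ne_f[OF assms]]) (auto dest: mono_len)

lemma gT_le: assumes "1 \<le> N" shows "gT r N T c \<le> N"
  unfolding gT_def
  by (rule Max.boundedI[OF fin_g ne_g[OF assms]]) (auto dest: dir_len)

lemma f_map:
  assumes q1: "1 \<le> q" and q'1: "1 \<le> q'" and N1: "1 \<le> N"
    and rng: "\<forall>x\<in>{1..q}. \<phi> x \<in> {1..q'}"
    and pre: "\<forall>S. S \<subseteq> {1..q'} \<and> card S \<le> r' \<longrightarrow> card {x\<in>{1..q}. \<phi> x \<in> S} \<le> r"
  shows "f q' r' N \<le> f q r N"
proof -
  let ?F = "{fK r N c | c. edge_coloring q N c}"
  have "edge_coloring q N (\<lambda>_ _. 1)" using q1 unfolding edge_coloring_def by auto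
  then have ne: "?F \<noteq> {}" by blast
  have fin: "finite ?F" by (rule finite_subset[of _ "{0..N}"]) (auto simp: fK_le[OF N1])
  have "f q r N \<in> ?F" unfolding f_def using Min_in[OF fin ne] .
  then obtain c0 where ec: "edge_coloring q N c0" and fe: "f q r N = fK r N c0" by blast
  define c' where "c' = (\<lambda>i j. \<phi> (c0 i j))"
  have ec': "edge_coloring q' N c'" using ec rng unfolding edge_coloring_def c'_def by auto
  have fin': "finite {fK r' N c | c. edge_coloring q' N c}"
    by (rule finite_subset[of _ "{0..N}"]) (auto simp: fK_le[OF N1])
  have "f q' r' N \<le> fK r' N c'" unfolding f_def
    by (rule Min_le[OF fin']) (use ec' in blast)
  also have "fK r' N c' \<le> fK r N c0" unfolding fK_def
  proof (rule Max_mono[OF _ ne_f[OF N1] fin_f], safe)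
    fix vs assume mp: "monotone_path N vs" and cc: "card (path_colors c' vs) \<le> r'"
    have A: "path_colors c0 vs \<subseteq> {1..q}"
    proof
      fix x assume "x \<in> path_colors c0 vs"
      then obtain i where x: "x = c0 (vs ! i) (vs ! Suc i)" and i: "Suc i < length vs"
        unfolding path_colors_def by blast
      have "vs ! i < vs ! Suc i" using mp i unfolding monotone_path_def
        by (simp add: sorted_wrt_nth_less)
      moreover have "vs ! i \<in> set vs" "vs ! Suc i \<in> set vs" using i by auto
      then have "vs ! i \<in> {1..N}" "vs ! Suc i \<in> {1..N}"
        using mp unfolding monotone_path_def by blast+
      ultimately show "x \<in> {1..q}" using ec x unfolding edge_coloring_def by auto
    qed
    have "card (path_colors c0 vs) \<le> r"
      by (rule card_pre[OF rng pre A]) (use cc in \<open>simp add: c'_def pc_map\<close>)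
    then show "\<exists>vs'. length vs = length vs' \<and> monotone_path N vs' \<and> card (path_colors c0 vs') \<le> r"
      using mp by blast
  qed
  finally show ?thesis using fe by simp
qed

lemma g_map:
  assumes q1: "1 \<le> q" and q'1: "1 \<le> q'" and N1: "1 \<le> N"
    and rng: "\<forall>x\<in>{1..q}. \<phi> x \<in> {1..q'}"
    and pre: "\<forall>S. S \<subseteq> {1..q'} \<and> card S \<le> r' \<longrightarrow> card {x\<in>{1..q}. \<phi> x \<in> S} \<le> r"
  shows "g q' r' N \<le> g q r N"
proof -
  let ?F = "{gT r N T c | T c. tournament N T \<and> arc_coloring q T c}"
  have "tournament N (\<lambda>i j. i \<in> {1..N} \<and> j \<in> {1..N} \<and> i < j)"
    unfolding tournament_def by auto
  moreover have "arc_coloring q T (\<lambda>_ _. 1)" for T using q1 unfolding arc_coloring_def by auto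
  ultimately have ne: "?F \<noteq> {}" by blast
  have fin: "finite ?F" by (rule finite_subset[of _ "{0..N}"]) (auto simp: gT_le[OF N1])
  have "g q r N \<in> ?F" unfolding g_def using Min_in[OF fin ne] .
  then obtain T c0 where tt: "tournament N T" and ec: "arc_coloring q T c0"
    and fe: "g q r N = gT r N T c0" by blast
  define c' where "c' = (\<lambda>i j. \<phi> (c0 i j))"
  have ec': "arc_coloring q' T c'" using ec rng unfolding arc_coloring_def c'_def by auto
  have fin': "finite {gT r' N T c | T c. tournament N T \<and> arc_coloring q' T c}"
    by (rule finite_subset[of _ "{0..N}"]) (auto simp: gT_le[OF N1])
  have "g q' r' N \<le> gT r' N T c'" unfolding g_def
    by (rule Min_le[OF fin']) (use ec' tt in blast)
  also have "gT r' N T c' \<le> gT r N T c0" unfolding gT_def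
  proof (rule Max_mono[OF _ ne_g[OF N1] fin_g], safe)
    fix vs assume mp: "directed_path N T vs" and cc: "card (path_colors c' vs) \<le> r'"
    have A: "path_colors c0 vs \<subseteq> {1..q}"
    proof
      fix x assume "x \<in> path_colors c0 vs"
      then obtain i where x: "x = c0 (vs ! i) (vs ! Suc i)" and i: "Suc i < length vs"
        unfolding path_colors_def by blast
      have "T (vs ! i) (vs ! Suc i)" using mp i unfolding directed_path_def by blast
      then show "x \<in> {1..q}" using ec x unfolding arc_coloring_def by auto
    qed
    have "card (path_colors c0 vs) \<le> r"
      by (rule card_pre[OF rng pre A]) (use cc in \<open>simp add: c'_def pc_map\<close>)
    then show "\<exists>vs'. length vs = length vs' \<and> directed_path N T vs' \<and> card (path_colors c0 vs') \<le> r"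
      using mp by blast
  qed
  finally show ?thesis using fe by simp
qed



lemma part1:
  assumes "1 \<le> r" "r < q" "1 \<le> N" "t < r"
  shows "f q r N \<ge> f (q - t) (r - t) N \<and> g q r N \<ge> g (q - t) (r - t) N"
proof -
  define \<phi> where "\<phi> = (\<lambda>x::nat. max 1 (x - t))"
  have rng: "\<forall>x\<in>{1..q}. \<phi> x \<in> {1..q-t}" using assms unfolding \<phi>_def by auto
  have pre: "\<forall>S. S \<subseteq> {1..q-t} \<and> card S \<le> r-t \<longrightarrow> card {x\<in>{1..q}. \<phi> x \<in> S} \<le> r"
  proof (intro allI impI)
    fix S assume S: "S \<subseteq> {1..q-t} \<and> card S \<le> r-t"
    have fS: "finite S" using S finite_subset by blast
    have "{x\<in>{1..q}. \<phi> x \<in> S} \<subseteq> {1..t} \<union> (\<lambda>s. s+t) ` S"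
    proof
      fix x assume x: "x \<in> {x\<in>{1..q}. \<phi> x \<in> S}"
      show "x \<in> {1..t} \<union> (\<lambda>s. s+t) ` S"
      proof (cases "x \<le> t")
        case False
        then have "\<phi> x = x - t" unfolding \<phi>_def by auto
        then have "x = \<phi> x + t" using False by simp
        then show ?thesis using x by blast
      qed (use x in auto)
    qed
    then have "card {x\<in>{1..q}. \<phi> x \<in> S} \<le> card ({1..t} \<union> (\<lambda>s. s+t) ` S)"
      by (intro card_mono) (use fS in auto)
    also have "\<dots> \<le> card {1..t} + card ((\<lambda>s. s+t) ` S)" by (rule card_Un_le)
    also have "\<dots> \<le> t + card S" using card_image_le[OF fS, of "\<lambda>s. s+t"] by simp
    finally show "card {x\<in>{1..q}. \<phi> x \<in> S} \<le> r" using S assms by linarith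
  qed
  show ?thesis using f_map[OF _ _ _ rng pre] g_map[OF _ _ _ rng pre] assms by auto
qed

lemma part2:
  assumes "1 \<le> r" "r < q" "1 \<le> N" "0 < d" "d dvd gcd q r"
  shows "f q r N \<ge> f (q div d) (r div d) N \<and> g q r N \<ge> g (q div d) (r div d) N"
proof -
  have dq: "d dvd q" and dr: "d dvd r" using assms by auto
  define \<phi> where "\<phi> = (\<lambda>x::nat. (x - 1) div d + 1)"
  have qd: "q = q div d * d" using dq by simp
  have rd: "r = r div d * d" using dr by simp
  have rng: "\<forall>x\<in>{1..q}. \<phi> x \<in> {1..q div d}"
  proof
    fix x assume x: "x \<in> {1..q}"
    have "x - 1 < q div d * d" using x qd by auto
    then have "(x - 1) div d < q div d" using assms(4) by (simp add: div_less_iff_less_mult)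
    then show "\<phi> x \<in> {1..q div d}" unfolding \<phi>_def by auto
  qed
  have pre: "\<forall>S. S \<subseteq> {1..q div d} \<and> card S \<le> r div d \<longrightarrow> card {x\<in>{1..q}. \<phi> x \<in> S} \<le> r"
  proof (intro allI impI)
    fix S assume S: "S \<subseteq> {1..q div d} \<and> card S \<le> r div d"
    have fS: "finite S" using S finite_subset by blast
    have "{x\<in>{1..q}. \<phi> x \<in> S} \<subseteq> (\<lambda>(s,k). d*(s-1)+k+1) ` (S \<times> {0..<d})"
    proof
      fix x assume x: "x \<in> {x\<in>{1..q}. \<phi> x \<in> S}"
      have "x - 1 = d * ((x - 1) div d) + (x - 1) mod d" by simp
      then have "x = d * (\<phi> x - 1) + (x - 1) mod d + 1" using x unfolding \<phi>_def by auto
      moreover have "(x - 1) mod d \<in> {0..<d}" using assms(4) by auto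
      ultimately show "x \<in> (\<lambda>(s,k). d*(s-1)+k+1) ` (S \<times> {0..<d})" using x
        by (intro image_eqI[where x="(\<phi> x, (x - 1) mod d)"]) auto
    qed
    then have "card {x\<in>{1..q}. \<phi> x \<in> S} \<le> card ((\<lambda>(s,k). d*(s-1)+k+1) ` (S \<times> {0..<d}))"
      by (intro card_mono) (use fS in auto)
    also have "\<dots> \<le> card (S \<times> {0..<d})" by (rule card_image_le) (use fS in auto)
    also have "\<dots> = card S * d" by (simp add: card_cartesian_product)
    also have "\<dots> \<le> r div d * d" using S by simp
    finally show "card {x\<in>{1..q}. \<phi> x \<in> S} \<le> r" using rd by simp
  qed
  have "q div d \<noteq> 0" using assms qd by (metis mult_0 not_less0)
  then have "1 \<le> q div d" by simp
  then show ?thesis using f_map[OF _ _ _ rng pre] g_map[OF _ _ _ rng pre] assms by auto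
qed

lemma part3:
  assumes "1 \<le> r" "r < q" "1 \<le> N" "q div (q - r) \<ge> 2"
  shows "f q r N \<ge> f (q div (q - r)) (q div (q - r) - 1) N \<and>
         g q r N \<ge> g (q div (q - r)) (q div (q - r) - 1) N"
proof -
  define m where "m = q - r"
  define p where "p = q div m"
  have m0: "0 < m" using assms unfolding m_def by simp
  have pm: "p * m \<le> q" unfolding p_def by simp
  have p2: "2 \<le> p" using assms unfolding p_def m_def by simp
  define \<phi> where "\<phi> = (\<lambda>x::nat. min p ((x - 1) div m + 1))"
  have rng: "\<forall>x\<in>{1..q}. \<phi> x \<in> {1..p}" unfolding \<phi>_def using p2 by auto
  have pre: "\<forall>S. S \<subseteq> {1..p} \<and> card S \<le> p - 1 \<longrightarrow> card {x\<in>{1..q}. \<phi> x \<in> S} \<le> r"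
  proof (intro allI impI)
    fix S assume S: "S \<subseteq> {1..p} \<and> card S \<le> p - 1"
    have "{1..p} - S \<noteq> {}"
    proof
      assume "{1..p} - S = {}"
      then have "{1..p} \<subseteq> S" by blast
      then have "card {1..p} \<le> card S" using S by (intro card_mono) (auto intro: finite_subset)
      then show False using S p2 by simp arith
    qed
    then obtain j where j: "j \<in> {1..p}" "j \<notin> S" by blast
    define B where "B = {(j-1)*m+1..j*m}"
    have jm: "j * m \<le> q" using j pm by (meson atLeastAtMost_iff le_trans mult_le_mono1)
    have Bq: "B \<subseteq> {1..q}" unfolding B_def using jm by auto
    have "j * m = (j - 1) * m + m" using j by (cases j) auto
    then have cB: "card B = m" unfolding B_def by simp
    have phiB: "\<phi> x = j" if "x \<in> B" for x
    proof -
      have "(j-1)*m \<le> x - 1" "x - 1 < j * m" using that j m0 unfolding B_def by auto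
      moreover have "j * m = (j - 1) * m + m" using j by (cases j) auto
      ultimately have "(x - 1) div m = j - 1" using m0
        by (intro div_nat_eqI) (auto simp: mult.commute)
      then show ?thesis unfolding \<phi>_def using j by auto
    qed
    have "{x\<in>{1..q}. \<phi> x \<in> S} \<subseteq> {1..q} - B" using phiB j by auto
    then have "card {x\<in>{1..q}. \<phi> x \<in> S} \<le> card ({1..q} - B)" by (intro card_mono) auto
    also have "\<dots> = q - m" using Bq cB by (simp add: card_Diff_subset finite_subset)
    finally show "card {x\<in>{1..q}. \<phi> x \<in> S} \<le> r" unfolding m_def using assms by simp
  qed
  show ?thesis using f_map[OF _ _ _ rng pre] g_map[OF _ _ _ rng pre] assms p2
    unfolding p_def m_def by auto
qed

theorem lemma3p8:
  fixes q r N :: nat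
  assumes "1 \<le> r" and "r < q" and "1 \<le> N"
  shows "(\<forall>t. t < r \<longrightarrow> f q r N \<ge> f (q - t) (r - t) N \<and> g q r N \<ge> g (q - t) (r - t) N)
       \<and> (\<forall>d. 0 < d \<and> d dvd gcd q r \<longrightarrow>
             f q r N \<ge> f (q div d) (r div d) N \<and> g q r N \<ge> g (q div d) (r div d) N)
       \<and> (q div (q - r) \<ge> 2 \<longrightarrow>
             f q r N \<ge> f (q div (q - r)) (q div (q - r) - 1) N \<and>
             g q r N \<ge> g (q div (q - r)) (q div (q - r) - 1) N)"
  using part1[OF assms] part2[OF assms] part3[OF assms] by blast

end
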